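(* Under the bilayer setting below (with $U$ even), let $\tilde\Psi_R$ be a solution of $\partial_x\tilde\Psi=A(x)\tilde\Psi$ of the form $$\tilde\Psi_R(x)=\begin{cases}\psi_R(x)+r(\theta)\psi_L(x)+\alpha_1\psi_+(x), & x<-x_0,\\ t(\theta)\psi_R(x)+\alpha_2\psi_-(x), & x>x_0,\end{cases}$$ with $r(\theta),t(\theta),\alpha_1,\alpha_2\in\mathbb{C}$ and $t(\theta)\neq0$. Then $q(\theta)=i\,\frac{r(\theta)}{t(\theta)}$ is real.
   Context: Bilayer setting: $U:\mathbb{R}\to\mathbb{R}$ piecewise continuous, supported in $[-x_0,x_0]$, even ($U(-x)=U(x)$). Fix $E>0$, $m,\hbar>0$, $\theta\in(-\pi/2,\pi/2)$; let $\kappa=\sqrt{2mE}/\hbar$, $a=\kappa\sin\theta$, $k=\kappa\cos\theta$, $\lambda=\sqrt{a^2+\kappa^2}$, $\tilde U(x)=\frac{2m}{\hbar^2}(U(x)-E)$. The ODE is $\partial_x\tilde\Psi=A(x)\tilde\Psi$ for $\tilde\Psi=(\Psi_1,\Phi_1,\Psi_2,\Phi_2)^t:\mathbb{R}\to\mathbb{C}^4$, $A(x)=\begin{pmatrix} a&1&0&0\\0&a&\tilde U(x)&0\\0&0&-a&1\\ \tilde U(x)&0&0&-a\end{pmatrix}$ (bilayer graphene equation after separation $e^{iay}$). Let $v_R=(a+ik,-\kappa^2,-(a-ik),-\kappa^2)^t$, $v_L=(a-ik,-\kappa^2,-(a+ik),-\kappa^2)^t$, $v_+=(a+\lambda,\kappa^2,a-\lambda,-\kappa^2)^t$,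 $v_-=(a-\lambda,\kappa^2,a+\lambda,-\kappa^2)^t$, and $\psi_R(x)=e^{ikx}v_R$, $\psi_L(x)=e^{-ikx}v_L$, $\psi_+(x)=e^{\lambda x}v_+$, $\psi_-(x)=e^{-\lambda x}v_-$; these solve the ODE where $U=0$. $r(\theta)$ and $t(\theta)$ are the reflection and transmission amplitudes, and $\theta$ is called magic if $r(\theta)=0$. *)

theory Defs
  imports "HOL-Analysis.Analysis"
begin

definition piecewise_continuous :: "(real \<Rightarrow> real) \<Rightarrow> bool" where
  "piecewise_continuous U \<longleftrightarrow>
     (\<exists>S. finite S \<and> continuous_on (- S) U \<and>
        (\<forall>s\<in>S. (\<exists>l. (U \<longlongrightarrow> l) (at_left s)) \<and> (\<exists>l. (U \<longlongrightarrow> l) (at_right s))))"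

definition bilayer_matrix :: "real \<Rightarrow> complex \<Rightarrow> complex^4^4" where
  "bilayer_matrix a Ut = vector [
      vector [of_real a, 1, 0, 0],
      vector [0, of_real a, Ut, 0],
      vector [0, 0, - of_real a, 1],
      vector [Ut, 0, 0, - of_real a]]"

text \<open>Solution of the ODE: continuous, and satisfying the equation away from a finite set
  (the discontinuities of the piecewise continuous potential).\<close>
definition bilayer_solution ::
  "real \<Rightarrow> (real \<Rightarrow> complex) \<Rightarrow> (real \<Rightarrow> complex^4) \<Rightarrow> bool" where
  "bilayer_solution a Ut \<Psi> \<longleftrightarrow> continuous_on UNIV \<Psi> \<and>
     (\<exists>S. finite S \<and> (\<forall>x. x \<notin> S \<longrightarrow>
        (\<Psi> has_vector_derivative (bilayer_matrix a (Ut x) *v \<Psi> x)) (at x)))"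

end

theory Submission
  imports Defs
begin


lemma vec4: "(vector [x1,x2,x3,x4] :: ('a::zero)^4) $ 1 = x1" "(vector [x1,x2,x3,x4] :: ('a::zero)^4) $ 2 = x2"
 "(vector [x1,x2,x3,x4] :: ('a::zero)^4) $ 3 = x3" "(vector [x1,x2,x3,x4] :: ('a::zero)^4) $ 4 = x4"
  by (simp_all add: vector_def)

lemma mv: fixes v :: "complex^4"
  shows "(bilayer_matrix a u *v v) $ 1 = of_real a * v$1 + v$2"
    "(bilayer_matrix a u *v v) $ 2 = of_real a * v$2 + u * v$3"
    "(bilayer_matrix a u *v v) $ 3 = - of_real a * v$3 + v$4"
    "(bilayer_matrix a u *v v) $ 4 = u * v$1 - of_real a * v$4"
  by (simp_all add: bilayer_matrix_def matrix_vector_mult_def sum_4 vec4)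

theorem proposition3:
  fixes U :: "real \<Rightarrow> real" and x0 E m hbar \<theta> :: real
    and \<Psi> :: "real \<Rightarrow> complex^4" and r t \<alpha>1 \<alpha>2 :: complex
  assumes pc: "piecewise_continuous U"
    and supp: "\<forall>x. \<bar>x\<bar> > x0 \<longrightarrow> U x = 0"
    and even: "\<forall>x. U (- x) = U x"
    and E: "E > 0" and m: "m > 0" and hbar: "hbar > 0"
    and \<theta>: "- (pi/2) < \<theta>" "\<theta> < pi/2"
  defines "\<kappa> \<equiv> sqrt (2 * m * E) / hbar"
  defines "a \<equiv> \<kappa> * sin \<theta>"
  defines "k \<equiv> \<kappa> * cos \<theta>"
  defines "lam \<equiv> sqrt (a^2 + \<kappa>^2)"
  defines "Ut \<equiv> (\<lambda>x. complex_of_real (2 * m / hbar^2 * (U x - E)))"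
  defines "vR \<equiv> vector [complex_of_real a + \<i> * k, - complex_of_real (\<kappa>^2),
                          - (complex_of_real a - \<i> * k), - complex_of_real (\<kappa>^2)] :: complex^4"
  defines "vL \<equiv> vector [complex_of_real a - \<i> * k, - complex_of_real (\<kappa>^2),
                          - (complex_of_real a + \<i> * k), - complex_of_real (\<kappa>^2)] :: complex^4"
  defines "vP \<equiv> vector [complex_of_real (a + lam), complex_of_real (\<kappa>^2),
                          complex_of_real (a - lam), - complex_of_real (\<kappa>^2)] :: complex^4"
  defines "vM \<equiv> vector [complex_of_real (a - lam), complex_of_real (\<kappa>^2),
                          complex_of_real (a + lam), - complex_of_real (\<kappa>^2)] :: complex^4"
  assumes sol: "bilayer_solution a Ut \<Psi>"
    and left: "\<forall>x. x < - x0 \<longrightarrow>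
       \<Psi> x = exp (\<i> * of_real (k * x)) *s vR + r *s (exp (- \<i> * of_real (k * x)) *s vL)
              + \<alpha>1 *s (exp (of_real (lam * x)) *s vP)"
    and right: "\<forall>x. x > x0 \<longrightarrow>
       \<Psi> x = t *s (exp (\<i> * of_real (k * x)) *s vR) + \<alpha>2 *s (exp (- of_real (lam * x)) *s vM)"
    and tnz: "t \<noteq> 0"
  shows "\<i> * r / t \<in> \<real>"
proof -
  from sol obtain S where contP: "continuous_on UNIV \<Psi>" and S: "finite S"
    and der: "\<And>x. x \<notin> S \<Longrightarrow> (\<Psi> has_vector_derivative (bilayer_matrix a (Ut x) *v \<Psi> x)) (at x)"
    unfolding bilayer_solution_def by blast
  have comp: "((\<lambda>x. \<Psi> x $ i) has_vector_derivative (bilayer_matrix a (Ut x) *v \<Psi> x) $ i) (at x)"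
    if "x \<notin> S" for x i
    using bounded_linear.has_vector_derivative[OF bounded_linear_vec_nth der[OF that]] .
  have compm: "((\<lambda>x. cnj (\<Psi> (-x) $ i)) has_vector_derivative
       - cnj ((bilayer_matrix a (Ut (-x)) *v \<Psi> (-x)) $ i)) (at x)"
    if "-x \<notin> S" for x i
  proof -
    have d1: "(uminus has_vector_derivative (-1::real)) (at x)"
      by (auto intro!: derivative_eq_intros)
    have "(((\<lambda>y. \<Psi> y $ i) \<circ> uminus) has_vector_derivative
          ((-1::real) *\<^sub>R (bilayer_matrix a (Ut (-x)) *v \<Psi> (-x)) $ i)) (at x)"
      using vector_diff_chain_at[OF d1 comp[OF that]] by simp
    from has_vector_derivative_cnj[OF this] show ?thesis by (simp add: o_def)
  qed
  have Ueven: "Ut (-x) = Ut x" for x using even by (simp add: Ut_def)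
  have Ureal: "cnj (Ut x) = Ut x" for x by (simp add: Ut_def)
  define G where "G x = cnj (\<Psi> (-x) $ 1) * \<Psi> x $ 2 + cnj (\<Psi> (-x) $ 2) * \<Psi> x $ 1
      + cnj (\<Psi> (-x) $ 3) * \<Psi> x $ 4 + cnj (\<Psi> (-x) $ 4) * \<Psi> x $ 3" for x
  have Gd: "(G has_derivative (\<lambda>h. 0)) (at x within UNIV)" if "x \<in> UNIV - (S \<union> uminus ` S)" for x
  proof -
    have x1: "x \<notin> S" and x2: "-x \<notin> S" using that by (auto simp: image_iff)
    have "(G has_vector_derivative 0) (at x)"
      unfolding G_def[abs_def]
      apply (rule has_vector_derivative_eq_rhs)
       apply (rule has_vector_derivative_add)+
       apply ((rule has_vector_derivative_mult, rule compm[OF x2], rule comp[OF x1])+)[4]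
      apply (simp add: mv Ueven Ureal algebra_simps)
      done
    then show ?thesis by (simp add: has_vector_derivative_def)
  qed
  have contG: "continuous_on UNIV G"
    unfolding G_def[abs_def]
    by (intro continuous_intros continuous_on_component continuous_on_compose2[OF contP]) auto
  have "G constant_on UNIV"
    by (rule has_derivative_zero_connected_constant_on[where K="S \<union> uminus ` S", OF _ _ _ contG])
      (use S Gd in auto)
  define y where "y = \<bar>x0\<bar> + 1"
  have yl: "-y < -x0" and yr: "y > x0" by (auto simp: y_def)
  have Geq: "G (-y) = G y" using \<open>G constant_on UNIV\<close> by (auto simp: constant_on_def)
  define e where "e = exp (\<i> * of_real (k * y))"
  define e' where "e' = exp (- (\<i> * of_real (k * y)))"
  define f where "f = exp (- complex_of_real (lam * y))"
  have ee: "e * e' = 1" by (simp add: e_def e'_def flip: exp_add)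
  have ce: "cnj e = e'" by (simp add: e_def e'_def exp_cnj)
  have ce': "cnj e' = e" by (simp add: e_def e'_def exp_cnj)
  have cf: "cnj f = f" by (simp add: f_def exp_cnj)
  have Pm: "\<Psi> (-y) = e' *s vR + r *s (e *s vL) + \<alpha>1 *s (f *s vP)"
    using left[rule_format, of "-y"] yl by (simp add: e_def e'_def f_def)
  have Pp: "\<Psi> y = t *s (e *s vR) + \<alpha>2 *s (f *s vM)"
    using right[rule_format, of y] yr by (simp add: e_def e'_def f_def)
  define C where "C = 4 * \<i> * of_real (\<kappa>^2 * k)"
  have G1: "G (-y) = cnj t * r * C * (e * e')"
    unfolding G_def minus_minus Pm Pp by (simp add: vR_def vL_def vP_def vM_def vec4 ce ce' cf C_def algebra_simps)
  have G2: "G y = - cnj r * t * C * (e * e')"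
    unfolding G_def Pm Pp minus_minus by (simp add: vR_def vL_def vP_def vM_def vec4 ce ce' cf C_def algebra_simps)
  have kap: "\<kappa> > 0" using E m hbar by (simp add: \<kappa>_def)
  have "cos \<theta> > 0" using \<theta> by (intro cos_gt_zero_pi) auto
  hence kpos: "k > 0" using kap by (simp add: k_def)
  have C0: "C \<noteq> 0" using kap kpos by (simp add: C_def)
  from Geq G1 G2 ee have h: "cnj t * r * C = - cnj r * t * C" by simp
  hence "(cnj t * r + cnj r * t) * C = 0" by (simp add: algebra_simps)
  hence h2: "cnj t * r = - (cnj r * t)" using C0 by (simp add: add_eq_0_iff)
  define w where "w = r * cnj t"
  have "Re (cnj t * r) = - Re (cnj r * t)" using h2 by simp
  moreover have "Re (cnj r * t) = Re (cnj t * r)" by simp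
  ultimately have Rw: "Re w = 0" by (simp add: w_def mult.commute)
  have ct: "cnj t \<noteq> 0" using tnz by simp
  have "\<i> * r / t = \<i> * w / (t * cnj t)"
    using tnz ct by (simp add: w_def field_simps)
  also have "t * cnj t = complex_of_real ((cmod t)^2)" by (rule complex_norm_square[symmetric])
  also have "\<i> * w / complex_of_real ((cmod t)^2) \<in> \<real>"
    using Rw by (simp add: complex_is_Real_iff Im_divide_of_real)
  finally show ?thesis .
qed

end
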